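(* Let $\bm{p},\bm{v},\bm{w}\in\mathbb{R}^3$ with $\bm{v},\bm{w}$ linearly independent, let $\pi=\{(y_1,y_2)\in\mathbb{R}^2 : 0<y_1<1,\ 0<y_2<y_1\}$, and let $\tau=\{\bm{p}+y_1\bm{v}+y_2\bm{w} : (y_1,y_2)\in\pi\}$ be the flat triangle parametrised by $\chi_\tau(\bm{y})=\bm{p}+y_1\bm{v}+y_2\bm{w}$. Let $g_\tau=\sqrt{\det(\bm{J}^\top\bm{J})}$ with $\bm{J}=(\bm{v}\mid\bm{w})\in\mathbb{R}^{3\times 2}$, and let \[ I=\int_\tau\int_\tau \frac{1}{4\pi|\bm{y}-\bm{x}|}\,dS(\bm{y})\,dS(\bm{x}) = \frac{g_\tau^2}{4\pi}\int_{\pi\times\pi}\frac{1}{|\chi_\tau(\bm{y})-\chi_\tau(\bm{x})|}\,d\bm{y}\,d\bm{x}. \] Then \[ I=\frac{g_\tau^2}{12\pi}\int_0^1\left(\frac{1}{|\eta\bm{v}+\bm{w}|}+\frac{1}{|\eta\bm{w}+\bm{v}|}+\frac{1}{|\eta(\bm{w}+\bm{v})-\bm{w}|}\right)d\eta, \] and consequently \[ I=\frac{g_\tau^2}{12\pi}\sum_{i=1}^{3}\bigl(F_i(1)-F_i(0)\bigr),\qquad F_i(\eta)=\frac{1}{\sqrt{\alpha_i}}\ln\!\Bigl(2\sqrt{\alpha_i}\sqrt{\gamma_i+\beta_i\eta+\alpha_i\eta^2}+2\alpha_i\eta+\beta_i\Bigr), \] where $\alpha_1=|\bm{v}|^2,\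 \beta_1=2\bm{v}\cdot\bm{w},\ \gamma_1=|\bm{w}|^2$; $\alpha_2=|\bm{w}|^2,\ \beta_2=2\bm{w}\cdot\bm{v},\ \gamma_2=|\bm{v}|^2$; $\alpha_3=|\bm{w}+\bm{v}|^2,\ \beta_3=-2(\bm{w}+\bm{v})\cdot\bm{w},\ \gamma_3=|\bm{w}|^2$.
   Context: $|\cdot|$ denotes the Euclidean norm on $\mathbb{R}^3$ and $dS$ the surface measure on $\tau$. This is the Galerkin single-layer (Laplace kernel $1/(4\pi|\bm{x}-\bm{y}|)$) matrix entry for piecewise constant basis functions on a pair of identical triangles. *)

theory Defs
  imports "HOL-Analysis.Analysis"
begin

definition ref_tri :: "(real \<times> real) set" where
  "ref_tri = {(y1, y2). 0 < y1 \<and> y1 < 1 \<and> 0 < y2 \<and> y2 < y1}"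

definition chi_tau :: "real^3 \<Rightarrow> real^3 \<Rightarrow> real^3 \<Rightarrow> real \<times> real \<Rightarrow> real^3" where
  "chi_tau p v w y = p + fst y *\<^sub>R v + snd y *\<^sub>R w"

definition jac :: "real^3 \<Rightarrow> real^3 \<Rightarrow> real^2^3" where
  "jac v w = (\<chi> i j. if j = 1 then v $ i else w $ i)"

definition gram_tau :: "real^3 \<Rightarrow> real^3 \<Rightarrow> real" where
  "gram_tau v w = sqrt (det (transpose (jac v w) ** jac v w))"

definition galerkin_I :: "real^3 \<Rightarrow> real^3 \<Rightarrow> real^3 \<Rightarrow> real" where
  "galerkin_I p v w = (gram_tau v w)^2 / (4 * pi) *
     (LINT z : (ref_tri \<times> ref_tri) | lborel.
        1 / norm (chi_tau p v w (fst z) - chi_tau p v w (snd z)))"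

definition F_aux :: "real \<Rightarrow> real \<Rightarrow> real \<Rightarrow> real \<Rightarrow> real" where
  "F_aux \<alpha> \<beta> \<gamma> \<eta> = 1 / sqrt \<alpha> *
     ln (2 * sqrt \<alpha> * sqrt (\<gamma> + \<beta> * \<eta> + \<alpha> * \<eta>^2) + 2 * \<alpha> * \<eta> + \<beta>)"

end

theory Submission
  imports Defs
begin

definition lin2 :: "'a::real_vector \<Rightarrow> 'a \<Rightarrow> bool" where
  "lin2 a b \<longleftrightarrow> (\<forall>c d. c *\<^sub>R a + d *\<^sub>R b = 0 \<longrightarrow> c = 0 \<and> d = 0)"

lemma lin2_vw:
  fixes v w :: "real^3"
  assumes "v \<noteq> w" "independent {v, w}"
  shows "lin2 v w"
proof -
  have ns: "v \<notin> span {w}" and iw: "independent {w}"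
    using assms by (auto simp: independent_insert)
  have w0: "w \<noteq> 0" using iw by auto
  show ?thesis unfolding lin2_def
  proof (intro allI impI)
    fix c d :: real assume h: "c *\<^sub>R v + d *\<^sub>R w = 0"
    have "c = 0"
    proof (rule ccontr)
      assume c: "c \<noteq> 0"
      have cv: "c *\<^sub>R v = - (d *\<^sub>R w)" using h by (simp add: eq_neg_iff_add_eq_0)
      have "v = (1 / c) *\<^sub>R (c *\<^sub>R v)" using c by simp
      also have "\<dots> = (- d / c) *\<^sub>R w" unfolding cv by simp
      finally have "v = (- d / c) *\<^sub>R w" .
      hence "v \<in> span {w}" by (metis span_base span_scale singletonI)
      thus False using ns by simp
    qed
    thus "c = 0 \<and> d = 0" using h w0 by simp
  qed
qed

lemma lin2_nz: "lin2 a b \<Longrightarrow> (x, y) \<noteq> (0, 0) \<Longrightarrow> x *\<^sub>R a + y *\<^sub>R b \<noteq> 0"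
  unfolding lin2_def by auto

lemma lin2_swap: "lin2 a b \<Longrightarrow> lin2 b a"
  unfolding lin2_def by (metis add.commute)

lemma lin2_3: "lin2 a b \<Longrightarrow> lin2 (b + a) (- b)"
  unfolding lin2_def
proof (intro allI impI)
  fix c d assume l: "\<forall>c d. c *\<^sub>R a + d *\<^sub>R b = 0 \<longrightarrow> c = 0 \<and> d = 0"
    and h: "c *\<^sub>R (b + a) + d *\<^sub>R - b = 0"
  have "c *\<^sub>R a + (c - d) *\<^sub>R b = 0" using h by (simp add: algebra_simps)
  thus "c = 0 \<and> d = 0" using l by fastforce
qed

lemma strict_cs:
  fixes a b :: "'a::real_inner"
  assumes "lin2 a b"
  shows "(a \<bullet> b)^2 < (norm a)^2 * (norm b)^2"
proof -
  have b0: "b \<noteq> 0" using lin2_nz[OF assms, of 0 1] by simp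
  have a0: "a \<noteq> 0" using lin2_nz[OF assms, of 1 0] by simp
  have le: "\<bar>a \<bullet> b\<bar> \<le> norm a * norm b" by (rule Cauchy_Schwarz_ineq2)
  have ne: "\<bar>a \<bullet> b\<bar> \<noteq> norm a * norm b"
  proof
    assume "\<bar>a \<bullet> b\<bar> = norm a * norm b"
    hence "norm a *\<^sub>R b = norm b *\<^sub>R a \<or> norm a *\<^sub>R b = - norm b *\<^sub>R a"
      using norm_cauchy_schwarz_abs_eq by blast
    hence "(- norm b) *\<^sub>R a + norm a *\<^sub>R b = 0 \<or> norm b *\<^sub>R a + norm a *\<^sub>R b = 0"
      by (auto simp: algebra_simps)
    thus False using assms b0 unfolding lin2_def by fastforce
  qed
  have "\<bar>a \<bullet> b\<bar> < norm a * norm b" using le ne by simp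
  hence "\<bar>a \<bullet> b\<bar>^2 < (norm a * norm b)^2"
    by (intro power_strict_mono) auto
  thus ?thesis by (simp add: power_mult_distrib)
qed

lemma normsq_expand:
  fixes a b :: "'a::real_inner"
  shows "(norm (x *\<^sub>R a + b))^2 = (norm b)^2 + 2 * (a \<bullet> b) * x + (norm a)^2 * x^2"
  by (simp only: power2_norm_eq_inner) (simp add: inner_add_left inner_add_right inner_commute algebra_simps power2_eq_square)

lemma ftc_term:
  fixes a b :: "'a::real_inner"
  assumes l: "lin2 a b"
  shows "((\<lambda>x. 1 / norm (x *\<^sub>R a + b)) has_integral
     (F_aux ((norm a)^2) (2 * (a \<bullet> b)) ((norm b)^2) 1 - F_aux ((norm a)^2) (2 * (a \<bullet> b)) ((norm b)^2) 0)) {0..1}"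
proof -
  define \<alpha> where "\<alpha> = (norm a)^2"
  define \<beta> where "\<beta> = 2 * (a \<bullet> b)"
  define \<gamma> where "\<gamma> = (norm b)^2"
  define q where "q x = \<gamma> + \<beta> * x + \<alpha> * x^2" for x
  have a0: "a \<noteq> 0" using lin2_nz[OF l, of 1 0] by simp
  have al: "\<alpha> > 0" using a0 by (simp add: \<alpha>_def)
  have qn: "q x = (norm (x *\<^sub>R a + b))^2" for x
    by (simp add: q_def normsq_expand \<alpha>_def \<beta>_def \<gamma>_def)
  have nz: "x *\<^sub>R a + b \<noteq> 0" for x using lin2_nz[OF l, of x 1] by simp
  have qpos: "q x > 0" for x using nz[of x] by (simp add: qn)
  have sq: "sqrt (q x) = norm (x *\<^sub>R a + b)" for x by (simp add: qn)
  have cs: "\<beta>^2 < 4 * \<alpha> * \<gamma>" using strict_cs[OF l]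
    by (simp add: \<alpha>_def \<beta>_def \<gamma>_def power_mult_distrib)
  have Dpos: "2 * sqrt \<alpha> * sqrt (q x) + 2 * \<alpha> * x + \<beta> > 0" for x
  proof -
    have "(2 * \<alpha> * x + \<beta>)^2 < 4 * \<alpha> * q x"
      using cs al by (simp add: q_def power2_eq_square algebra_simps)
    also have "\<dots> = (2 * sqrt \<alpha> * sqrt (q x))^2"
      using al qpos[of x] by (simp add: power_mult_distrib)
    finally have "\<bar>2 * \<alpha> * x + \<beta>\<bar>^2 < (2 * sqrt \<alpha> * sqrt (q x))^2" by simp
    hence "\<bar>2 * \<alpha> * x + \<beta>\<bar> < 2 * sqrt \<alpha> * sqrt (q x)"
      by (rule power2_less_imp_less) (use al qpos[of x] in auto)
    thus ?thesis by linarith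
  qed
  have deriv: "((\<lambda>x. F_aux \<alpha> \<beta> \<gamma> x) has_real_derivative 1 / norm (x *\<^sub>R a + b)) (at x)" for x
  proof -
    have dq: "(q has_real_derivative (\<beta> + 2 * \<alpha> * x)) (at x)"
      unfolding q_def by (auto intro!: derivative_eq_intros)
    have dsq: "((\<lambda>x. sqrt (q x)) has_real_derivative inverse (sqrt (q x)) / 2 * (\<beta> + 2 * \<alpha> * x)) (at x)"
      by (rule DERIV_chain2[OF DERIV_real_sqrt[OF qpos] dq])
    have dD: "((\<lambda>x. 2 * sqrt \<alpha> * sqrt (q x) + 2 * \<alpha> * x + \<beta>) has_real_derivative
        2 * sqrt \<alpha> * (inverse (sqrt (q x)) / 2 * (\<beta> + 2 * \<alpha> * x)) + 2 * \<alpha>) (at x)"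
      using qpos[of x] by (auto intro!: derivative_eq_intros dq)
    have dl: "((\<lambda>x. ln (2 * sqrt \<alpha> * sqrt (q x) + 2 * \<alpha> * x + \<beta>)) has_real_derivative
        inverse (2 * sqrt \<alpha> * sqrt (q x) + 2 * \<alpha> * x + \<beta>) * (2 * sqrt \<alpha> * (inverse (sqrt (q x)) / 2 * (\<beta> + 2 * \<alpha> * x)) + 2 * \<alpha>)) (at x)"
      by (rule DERIV_chain2[OF DERIV_ln[OF Dpos] dD])
    have d: "((\<lambda>x. F_aux \<alpha> \<beta> \<gamma> x) has_real_derivative 1 / sqrt \<alpha> * (inverse (2 * sqrt \<alpha> * sqrt (q x) + 2 * \<alpha> * x + \<beta>) * (2 * sqrt \<alpha> * (inverse (sqrt (q x)) / 2 * (\<beta> + 2 * \<alpha> * x)) + 2 * \<alpha>))) (at x)"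
      unfolding F_aux_def q_def[symmetric] by (rule DERIV_cmult[OF dl])
    have "1 / sqrt \<alpha> * (inverse (2 * sqrt \<alpha> * sqrt (q x) + 2 * \<alpha> * x + \<beta>) * (2 * sqrt \<alpha> * (inverse (sqrt (q x)) / 2 * (\<beta> + 2 * \<alpha> * x)) + 2 * \<alpha>)) = 1 / sqrt (q x)"
    proof -
      have sa: "sqrt \<alpha> > 0" "sqrt \<alpha> * sqrt \<alpha> = \<alpha>" using al by auto
      have sqq: "sqrt (q x) > 0" using qpos[of x] by simp
      define r where "r = sqrt (q x)"
      define t where "t = sqrt \<alpha>"
      have a: "\<alpha> = t * t" using sa by (simp add: t_def)
      have t0: "t > 0" and r0: "r > 0" using sa sqq by (auto simp: t_def r_def)
      have D0: "2 * t * r + 2 * (t * t) * x + \<beta> > 0" unfolding t_def r_def using Dpos[of x] sa(2) by simp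
      have e: "2 * t * (inverse r / 2 * (\<beta> + 2 * (t * t) * x)) + 2 * (t * t) = t * (2 * t * r + 2 * (t * t) * x + \<beta>) / r"
        using r0 by (simp add: field_simps)
      have "1 / t * (inverse (2 * t * r + 2 * (t * t) * x + \<beta>) * (2 * t * (inverse r / 2 * (\<beta> + 2 * (t * t) * x)) + 2 * (t * t))) = 1 / r"
        unfolding e
      proof -
        have g: "\<And>D. D \<noteq> 0 \<Longrightarrow> 1 / t * (inverse D * (t * D / r)) = 1 / r" using t0 by (simp add: field_simps)
        show "1 / t * (inverse (2 * t * r + 2 * (t * t) * x + \<beta>) * (t * (2 * t * r + 2 * (t * t) * x + \<beta>) / r)) = 1 / r"
          by (rule g) (use D0 in simp)
      qed
      then show ?thesis unfolding r_def t_def sa(2) .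
    qed
    with d show ?thesis by (simp add: sq)
  qed
  have "((\<lambda>x. 1 / norm (x *\<^sub>R a + b)) has_integral (F_aux \<alpha> \<beta> \<gamma> 1 - F_aux \<alpha> \<beta> \<gamma> 0)) {0..1}"
    by (intro fundamental_theorem_of_calculus)
       (auto intro!: has_field_derivative_at_within deriv simp: has_real_derivative_iff_has_vector_derivative[symmetric])
  thus ?thesis by (simp add: \<alpha>_def \<beta>_def \<gamma>_def)
qed

lemma G1: "(\<integral>\<^sup>+y. indicator {c<..<d} y \<partial>lborel) = ennreal (max 0 (d - c))"
proof (cases "c \<le> d")
  case True thus ?thesis by (simp add: max_def)
next
  case False thus ?thesis by (simp add: max_def)
qed

lemma G2: "(\<integral>\<^sup>+y. ennreal (indicator {..<d} y * max 0 (y - c)) \<partial>lborel) = ennreal ((max 0 (d - c))^2 / 2)"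
proof (cases "d \<le> c")
  case True
  have "(\<integral>\<^sup>+y. ennreal (indicator {..<d} y * max 0 (y - c)) \<partial>lborel) = (\<integral>\<^sup>+(y::real). 0 \<partial>lborel)"
    by (rule nn_integral_cong) (use True in \<open>auto simp: indicator_def max_def\<close>)
  thus ?thesis using True by (simp add: max_def)
next
  case False
  have "(\<integral>\<^sup>+y. ennreal (indicator {..<d} y * max 0 (y - c)) \<partial>lborel) = (\<integral>\<^sup>+y. ennreal (y - c) * indicator {c..d} y \<partial>lborel)"
    by (intro nn_integral_cong_AE eventually_mono[OF AE_lborel_singleton[of d]])
       (auto simp: indicator_def max_def)
  also have "\<dots> = ennreal ((d - c)^2 / 2)"
  proof (rule nn_integral_has_integral_lebesgue')
    show "((\<lambda>y. y - c) has_integral (d - c)^2 / 2) {c..d}"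
    proof -
      have "((\<lambda>y. y - c) has_integral ((d - c)^2 / 2 - (c - c)^2 / 2)) {c..d}"
        using False
        by (intro fundamental_theorem_of_calculus)
           (auto intro!: derivative_eq_intros simp: has_real_derivative_iff_has_vector_derivative[symmetric])
      thus ?thesis by simp
    qed
  qed auto
  finally show ?thesis using False by (simp add: max_def)
qed

lemma G3: "(\<integral>\<^sup>+a. ennreal ((max 0 (1 - a))^2 / 2) * indicator {0<..} a \<partial>lborel) = ennreal (1/6)"
proof -
  have "(\<integral>\<^sup>+a. ennreal ((max 0 (1 - a))^2 / 2) * indicator {0<..} a \<partial>lborel) = (\<integral>\<^sup>+a. ennreal ((1 - a)^2 / 2) * indicator {0..1} a \<partial>lborel)"
    by (intro nn_integral_cong_AE eventually_mono[OF AE_lborel_singleton[of 0]])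
       (auto simp: indicator_def max_def)
  also have "\<dots> = ennreal (1/6)"
  proof (rule nn_integral_has_integral_lebesgue')
    show "((\<lambda>a. (1 - a)^2 / 2) has_integral 1/6) {0..1::real}"
    proof -
      have "((\<lambda>a. (1 - a)^2 / 2) has_integral ((\<lambda>a. - ((1 - a)^3) / 6) 1 - (\<lambda>a. - ((1 - a)^3) / 6) 0)) {0..1::real}"
        by (rule fundamental_theorem_of_calculus)
           (auto intro!: derivative_eq_intros simp: has_real_derivative_iff_has_vector_derivative[symmetric] power2_eq_square field_simps)
      thus ?thesis by simp
    qed
  qed auto
  finally show ?thesis .
qed

lemma borel_fst_rr[measurable]: "(fst :: real \<times> real \<Rightarrow> real) \<in> borel_measurable borel"
  by (intro borel_measurable_continuous_onI continuous_intros)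
lemma borel_snd_rr[measurable]: "(snd :: real \<times> real \<Rightarrow> real) \<in> borel_measurable borel"
  by (intro borel_measurable_continuous_onI continuous_intros)

lemma ref_tri_borel[measurable]: "ref_tri \<in> sets borel"
proof -
  have "open ref_tri" unfolding ref_tri_def case_prod_beta
    by (intro open_Collect_conj open_Collect_less continuous_intros)
  thus ?thesis by simp
qed

definition rho :: "real \<Rightarrow> real \<Rightarrow> real" where
  "rho a b = max 0 a + max 0 (b - a) + max 0 (- b)"

lemma area:
  fixes u :: "real \<times> real"
  shows "(\<integral>\<^sup>+x. ennreal (indicator ref_tri x * indicator ref_tri (x + u)) \<partial>lborel)
     = ennreal ((max 0 (1 - rho (fst u) (snd u)))^2 / 2)"
proof -
  obtain a b where u: "u = (a, b)" by (cases u)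
  define L where "L = max 0 (- b)"
  define m where "m = min 0 (a - b)"
  define U where "U = min 1 (1 - a)"
  have pw: "indicator ref_tri x * indicator ref_tri (x + u) =
      (if fst x < U \<and> L < snd x \<and> snd x < fst x + m then 1 else (0::real))" for x :: "real \<times> real"
    unfolding u L_def m_def U_def ref_tri_def
    by (cases x) (auto simp: indicator_def)
  have "(\<integral>\<^sup>+x. ennreal (indicator ref_tri x * indicator ref_tri (x + u)) \<partial>lborel)
      = (\<integral>\<^sup>+x. ennreal (if fst x < U \<and> L < snd x \<and> snd x < fst x + m then 1 else 0) \<partial>(lborel \<Otimes>\<^sub>M lborel))"
    unfolding pw lborel_prod ..
  also have "\<dots> = (\<integral>\<^sup>+x1. \<integral>\<^sup>+x2. ennreal (if x1 < U \<and> L < x2 \<and> x2 < x1 + m then 1 else 0) \<partial>lborel \<partial>lborel)"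
  proof -
    have meas: "(\<lambda>x::real\<times>real. ennreal (if fst x < U \<and> L < snd x \<and> snd x < fst x + m then 1 else 0)) \<in> borel_measurable (lborel \<Otimes>\<^sub>M lborel)"
      by measurable
    show ?thesis using lborel.nn_integral_fst[OF meas] by simp
  qed
  also have "\<dots> = (\<integral>\<^sup>+x1. ennreal (indicator {..<U} x1 * max 0 (x1 - (L - m))) \<partial>lborel)"
  proof (rule nn_integral_cong)
    fix x1 :: real
    show "(\<integral>\<^sup>+x2. ennreal (if x1 < U \<and> L < x2 \<and> x2 < x1 + m then 1 else 0) \<partial>lborel)
        = ennreal (indicator {..<U} x1 * max 0 (x1 - (L - m)))"
    proof (cases "x1 < U")
      case True
      have "(\<integral>\<^sup>+x2. ennreal (if x1 < U \<and> L < x2 \<and> x2 < x1 + m then 1 else 0) \<partial>lborel)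
          = (\<integral>\<^sup>+x2. indicator {L<..<x1 + m} x2 \<partial>lborel)"
        using True by (intro nn_integral_cong) (auto simp: indicator_def)
      also have "\<dots> = ennreal (max 0 (x1 + m - L))" by (rule G1)
      finally show ?thesis using True by (simp add: algebra_simps)
    next
      case False
      thus ?thesis by simp
    qed
  qed
  also have "\<dots> = ennreal ((max 0 (U - (L - m)))^2 / 2)" by (rule G2)
  also have "U - (L - m) = 1 - rho (fst u) (snd u)"
    unfolding u U_def L_def m_def rho_def by simp
  finally show ?thesis .
qed

definition qn :: "real^3 \<Rightarrow> real^3 \<Rightarrow> real \<Rightarrow> real \<Rightarrow> real" where
  "qn v w a b = norm (a *\<^sub>R v + b *\<^sub>R w)"

definition HH :: "real^3 \<Rightarrow> real^3 \<Rightarrow> real \<Rightarrow> real \<Rightarrow> ennreal" where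
  "HH v w a b = ennreal (1 / qn v w a b) * ennreal ((max 0 (1 - rho a b))^2 / 2)"

lemma HH_meas[measurable]: "(\<lambda>(a, b). HH v w a b) \<in> borel_measurable (lborel \<Otimes>\<^sub>M lborel)"
  unfolding HH_def qn_def rho_def by measurable

lemma S1:
  fixes p v w :: "real^3"
  shows "(\<integral>\<^sup>+z. ennreal (indicator (ref_tri \<times> ref_tri) z *\<^sub>R (1 / norm (chi_tau p v w (fst z) - chi_tau p v w (snd z)))) \<partial>lborel)
    = (\<integral>\<^sup>+a. \<integral>\<^sup>+b. HH v w a b \<partial>lborel \<partial>lborel)"
proof -
  define \<phi> where "\<phi> x y = ennreal (indicator ref_tri x * indicator ref_tri y * (1 / norm (chi_tau p v w x - chi_tau p v w y)))"
    for x y :: "real \<times> real"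
  have m1: "(\<lambda>z. \<phi> (fst z) (snd z)) \<in> borel_measurable (lborel \<Otimes>\<^sub>M lborel)"
    unfolding \<phi>_def chi_tau_def by measurable
  have "(\<integral>\<^sup>+z. ennreal (indicator (ref_tri \<times> ref_tri) z *\<^sub>R (1 / norm (chi_tau p v w (fst z) - chi_tau p v w (snd z)))) \<partial>lborel)
     = (\<integral>\<^sup>+z. \<phi> (fst z) (snd z) \<partial>(lborel \<Otimes>\<^sub>M lborel))"
    unfolding lborel_prod \<phi>_def by (intro nn_integral_cong) (auto simp: indicator_times)
  also have "\<dots> = (\<integral>\<^sup>+x. \<integral>\<^sup>+y. \<phi> x y \<partial>lborel \<partial>lborel)"
    using lborel.nn_integral_fst[OF m1] by simp
  also have "\<dots> = (\<integral>\<^sup>+x. \<integral>\<^sup>+u. ennreal (indicator ref_tri x * indicator ref_tri (x + u)) * ennreal (1 / qn v w (fst u) (snd u)) \<partial>lborel \<partial>lborel)"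
  proof (rule nn_integral_cong)
    fix x :: "real \<times> real"
    have m2: "\<phi> x \<in> borel_measurable borel" unfolding \<phi>_def chi_tau_def by measurable
    have "(\<integral>\<^sup>+y. \<phi> x y \<partial>lborel) = (\<integral>\<^sup>+y. \<phi> x y \<partial>(distr lborel borel ((+) x)))"
      by (simp add: lborel_distr_plus)
    also have "\<dots> = (\<integral>\<^sup>+u. \<phi> x (x + u) \<partial>lborel)"
      by (rule nn_integral_distr) (auto simp: m2)
    also have "\<dots> = (\<integral>\<^sup>+u. ennreal (indicator ref_tri x * indicator ref_tri (x + u)) * ennreal (1 / qn v w (fst u) (snd u)) \<partial>lborel)"
    proof (rule nn_integral_cong)
      fix u :: "real \<times> real"
      have "chi_tau p v w x - chi_tau p v w (x + u) = - (fst u *\<^sub>R v + snd u *\<^sub>R w)"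
        unfolding chi_tau_def by (simp add: algebra_simps)
      hence "norm (chi_tau p v w x - chi_tau p v w (x + u)) = qn v w (fst u) (snd u)"
        unfolding qn_def by (simp only: norm_minus_cancel)
      hence "\<phi> x (x + u) = ennreal ((indicator ref_tri x * indicator ref_tri (x + u)) * (1 / qn v w (fst u) (snd u)))"
        unfolding \<phi>_def by (simp only: mult.assoc)
      also have "\<dots> = ennreal (indicator ref_tri x * indicator ref_tri (x + u)) * ennreal (1 / qn v w (fst u) (snd u))"
        by (rule ennreal_mult) (auto simp: qn_def)
      finally show "\<phi> x (x + u) = ennreal (indicator ref_tri x * indicator ref_tri (x + u)) * ennreal (1 / qn v w (fst u) (snd u))" .
    qed
    finally show "(\<integral>\<^sup>+y. \<phi> x y \<partial>lborel) = \<dots>" .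
  qed
  also have "\<dots> = (\<integral>\<^sup>+u. \<integral>\<^sup>+x. ennreal (indicator ref_tri x * indicator ref_tri (x + u)) * ennreal (1 / qn v w (fst u) (snd u)) \<partial>lborel \<partial>lborel)"
  proof -
    have m3: "(\<lambda>(x::real\<times>real, u::real\<times>real). ennreal (indicator ref_tri x * indicator ref_tri (x + u)) * ennreal (1 / qn v w (fst u) (snd u))) \<in> borel_measurable (lborel \<Otimes>\<^sub>M lborel)"
      unfolding qn_def by measurable
    show ?thesis using lborel_pair.Fubini'[OF m3] by simp
  qed
  also have "\<dots> = (\<integral>\<^sup>+u. ennreal (1 / qn v w (fst u) (snd u)) * ennreal ((max 0 (1 - rho (fst u) (snd u)))^2 / 2) \<partial>lborel)"
    by (intro nn_integral_cong) (simp add: nn_integral_multc area mult.commute)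
  also have "\<dots> = (\<integral>\<^sup>+u. HH v w (fst u) (snd u) \<partial>(lborel \<Otimes>\<^sub>M lborel))"
    unfolding lborel_prod HH_def ..
  also have "\<dots> = (\<integral>\<^sup>+a. \<integral>\<^sup>+b. HH v w a b \<partial>lborel \<partial>lborel)"
  proof -
    have m4: "(\<lambda>u::real\<times>real. HH v w (fst u) (snd u)) \<in> borel_measurable (lborel \<Otimes>\<^sub>M lborel)"
      using HH_meas by (simp add: case_prod_beta')
    show ?thesis using lborel.nn_integral_fst[OF m4] by simp
  qed
  finally show ?thesis .
qed

definition Aw0 :: "real \<Rightarrow> real" where "Aw0 x = (max 0 (1 - x))^2 / 2"

definition P1 where "P1 v w a b = (if 0 < a \<and> a < b then HH v w a b else 0)"
definition P2 where "P2 v w a b = (if 0 < a \<and> 0 \<le> b \<and> b \<le> a then HH v w a b else 0)"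
definition P3 where "P3 v w a b = (if 0 < a \<and> b < 0 then HH v w a b else 0)"


lemma Pm0[measurable]: "(\<lambda>(a, b). P1 v w a b) \<in> borel_measurable (lborel \<Otimes>\<^sub>M lborel)"
  unfolding P1_def P2_def P3_def HH_def qn_def rho_def by measurable

lemma Pm1[measurable]: "(\<lambda>(a, b). P2 v w a b) \<in> borel_measurable (lborel \<Otimes>\<^sub>M lborel)"
  unfolding P1_def P2_def P3_def HH_def qn_def rho_def by measurable

lemma Pm2[measurable]: "(\<lambda>(a, b). P3 v w a b) \<in> borel_measurable (lborel \<Otimes>\<^sub>M lborel)"
  unfolding P1_def P2_def P3_def HH_def qn_def rho_def by measurable

lemma Pm3[measurable]: "P1 v w a \<in> borel_measurable borel"
  unfolding P1_def P2_def P3_def HH_def qn_def rho_def by measurable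

lemma Pm4[measurable]: "P2 v w a \<in> borel_measurable borel"
  unfolding P1_def P2_def P3_def HH_def qn_def rho_def by measurable

lemma Pm5[measurable]: "P3 v w a \<in> borel_measurable borel"
  unfolding P1_def P2_def P3_def HH_def qn_def rho_def by measurable

lemma Pm6[measurable]: "(\<lambda>a. P1 v w a b) \<in> borel_measurable borel"
  unfolding P1_def P2_def P3_def HH_def qn_def rho_def by measurable

lemma Pm7[measurable]: "(\<lambda>a. P3 v w a (a - s)) \<in> borel_measurable borel"
  unfolding P1_def P2_def P3_def HH_def qn_def rho_def by measurable

lemma Pm8[measurable]: "(\<lambda>(a, s). P3 v w a (a - s)) \<in> borel_measurable (lborel \<Otimes>\<^sub>M lborel)"
  unfolding P1_def P2_def P3_def HH_def qn_def rho_def by measurable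

lemma Pm9[measurable]: "HH v w a \<in> borel_measurable borel"
  unfolding P1_def P2_def P3_def HH_def qn_def rho_def by measurable

lemma qn_scale: "c > 0 \<Longrightarrow> qn v w (c * a) (c * b) = c * qn v w a b"
proof -
  assume c: "c > 0"
  have "(c * a) *\<^sub>R v + (c * b) *\<^sub>R w = c *\<^sub>R (a *\<^sub>R v + b *\<^sub>R w)" by (simp add: algebra_simps)
  thus ?thesis using c unfolding qn_def by simp
qed

lemma qn_neg: "qn v w (- a) (- b) = qn v w a b"
proof -
  have "(- a) *\<^sub>R v + (- b) *\<^sub>R w = - (a *\<^sub>R v + b *\<^sub>R w)" by (simp add: algebra_simps)
  thus ?thesis unfolding qn_def by (simp only: norm_minus_cancel)
qed

lemma rho_neg: "rho (- a) (- b) = rho a b"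
  unfolding rho_def by (simp add: max_def)

lemma HH_neg: "HH v w (- a) (- b) = HH v w a b"
  unfolding HH_def by (simp only: qn_neg rho_neg)

lemma scale_helper:
  assumes "c > 0" "q \<ge> 0"
  shows "ennreal c * (ennreal (1 / (c * q)) * X) = ennreal (1 / q) * X"
proof -
  have "ennreal c * ennreal (1 / (c * q)) = ennreal (c * (1 / (c * q)))"
    using assms by (intro ennreal_mult[symmetric]) auto
  also have "c * (1 / (c * q)) = 1 / q" using assms by (cases "q = 0") auto
  finally show ?thesis by (simp add: mult.assoc[symmetric])
qed

lemma qn_nonneg: "qn v w a b \<ge> 0" unfolding qn_def by simp

lemma HH_P2:
  assumes "a > 0" "0 \<le> t" "t \<le> 1"
  shows "ennreal a * HH v w a (a * t) = ennreal (1 / qn v w 1 t) * ennreal (Aw0 a)"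
proof -
  have q: "qn v w a (a * t) = a * qn v w 1 t" using qn_scale[OF assms(1), of v w 1 t] by simp
  have "0 \<le> a * t" "a * t \<le> a" using assms by (auto intro: mult_left_le)
  hence r: "rho a (a * t) = a" unfolding rho_def by (simp add: max_def)
  have "ennreal a * HH v w a (a * t) = ennreal a * (ennreal (1 / (a * qn v w 1 t)) * ennreal (Aw0 a))"
    unfolding HH_def q r Aw0_def ..
  also have "\<dots> = ennreal (1 / qn v w 1 t) * ennreal (Aw0 a)"
    by (rule scale_helper) (use assms qn_nonneg in auto)
  finally show ?thesis .
qed

lemma HH_P1:
  assumes "b > 0" "0 < s" "s < 1"
  shows "ennreal b * HH v w (b * s) b = ennreal (1 / qn v w s 1) * ennreal (Aw0 b)"
proof -
  have q: "qn v w (b * s) b = b * qn v w s 1" using qn_scale[OF assms(1), of v w s 1] by simp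
  have "0 \<le> b * s" "b * s \<le> b" using assms by (auto intro: mult_left_le)
  hence r: "rho (b * s) b = b" unfolding rho_def by (simp add: max_def)
  have "ennreal b * HH v w (b * s) b = ennreal b * (ennreal (1 / (b * qn v w s 1)) * ennreal (Aw0 b))"
    unfolding HH_def q r Aw0_def ..
  also have "\<dots> = ennreal (1 / qn v w s 1) * ennreal (Aw0 b)"
    by (rule scale_helper) (use assms qn_nonneg in auto)
  finally show ?thesis .
qed

lemma HH_P3:
  assumes "s > 0" "0 < e" "e < 1"
  shows "ennreal s * HH v w (s * e) (s * e - s) = ennreal (1 / qn v w e (e - 1)) * ennreal (Aw0 s)"
proof -
  have q: "qn v w (s * e) (s * e - s) = s * qn v w e (e - 1)"
    using qn_scale[OF assms(1), of v w e "e - 1"] by (simp add: algebra_simps)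
  have "0 \<le> s * e" "s * e \<le> s" using assms by (auto intro: mult_left_le)
  hence r: "rho (s * e) (s * e - s) = s" unfolding rho_def by (simp add: max_def)
  have "ennreal s * HH v w (s * e) (s * e - s) = ennreal s * (ennreal (1 / (s * qn v w e (e - 1))) * ennreal (Aw0 s))"
    unfolding HH_def q r Aw0_def ..
  also have "\<dots> = ennreal (1 / qn v w e (e - 1)) * ennreal (Aw0 s)"
    by (rule scale_helper) (use assms qn_nonneg in auto)
  finally show ?thesis .
qed

definition K1 where "K1 v w = (\<integral>\<^sup>+s. ennreal (1 / qn v w s 1) * indicator {0<..<1} s \<partial>lborel)"
definition K2 where "K2 v w = (\<integral>\<^sup>+t. ennreal (1 / qn v w 1 t) * indicator {0..1} t \<partial>lborel)"
definition K3 where "K3 v w = (\<integral>\<^sup>+e. ennreal (1 / qn v w e (e - 1)) * indicator {0<..<1} e \<partial>lborel)"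

lemma G3': "(\<integral>\<^sup>+a. ennreal (Aw0 a) * indicator {0<..} a \<partial>lborel) = ennreal (1/6)"
  unfolding Aw0_def by (rule G3)

lemma J2: "(\<integral>\<^sup>+a. \<integral>\<^sup>+b. P2 v w a b \<partial>lborel \<partial>lborel) = ennreal (1/6) * K2 v w"
proof -
  have inner: "(\<integral>\<^sup>+b. P2 v w a b \<partial>lborel) = ennreal (Aw0 a) * indicator {0<..} a * K2 v w" for a
  proof (cases "a > 0")
    case True
    have "(\<integral>\<^sup>+b. P2 v w a b \<partial>lborel) = ennreal \<bar>a\<bar> * (\<integral>\<^sup>+t. P2 v w a (0 + a * t) \<partial>lborel)"
      using True by (intro nn_integral_real_affine) auto
    also have "\<dots> = (\<integral>\<^sup>+t. ennreal a * P2 v w a (a * t) \<partial>lborel)"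
      using True by (subst nn_integral_cmult) auto
    also have "\<dots> = (\<integral>\<^sup>+t. ennreal (Aw0 a) * (ennreal (1 / qn v w 1 t) * indicator {0..1} t) \<partial>lborel)"
    proof (rule nn_integral_cong)
      fix t :: real
      show "ennreal a * P2 v w a (a * t) = ennreal (Aw0 a) * (ennreal (1 / qn v w 1 t) * indicator {0..1} t)"
      proof (cases "0 \<le> t \<and> t \<le> 1")
        case c: True
        have "0 \<le> a * t" "a * t \<le> a" using c True by (auto intro: mult_left_le)
        hence "P2 v w a (a * t) = HH v w a (a * t)" using True by (simp add: P2_def)
        thus ?thesis using HH_P2[OF True, of t v w] c by (simp add: mult.commute)
      next
        case c: False
        have "\<not> (0 \<le> a * t \<and> a * t \<le> a)"
        proof
          assume h: "0 \<le> a * t \<and> a * t \<le> a"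
          hence "0 \<le> t" using True by (simp add: zero_le_mult_iff)
          moreover have "t \<le> 1" using h True by (simp add: mult_le_cancel_left1)
          ultimately show False using c by simp
        qed
        hence "P2 v w a (a * t) = 0" unfolding P2_def by auto
        moreover have "indicator {0..1} t = (0::ennreal)" using c by auto
        ultimately show ?thesis by simp
      qed
    qed
    also have "\<dots> = ennreal (Aw0 a) * K2 v w"
      unfolding K2_def by (subst nn_integral_cmult) (auto simp: qn_def)
    finally show ?thesis using True by simp
  next
    case False
    hence "P2 v w a b = 0" for b by (simp add: P2_def)
    thus ?thesis using False by simp
  qed
  have "(\<integral>\<^sup>+a. \<integral>\<^sup>+b. P2 v w a b \<partial>lborel \<partial>lborel) = (\<integral>\<^sup>+a. ennreal (Aw0 a) * indicator {0<..} a * K2 v w \<partial>lborel)"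
    by (simp add: inner)
  also have "\<dots> = (\<integral>\<^sup>+a. ennreal (Aw0 a) * indicator {0<..} a \<partial>lborel) * K2 v w"
    by (subst nn_integral_multc) (auto simp: Aw0_def)
  finally show ?thesis by (simp add: G3')
qed

lemma J1: "(\<integral>\<^sup>+a. \<integral>\<^sup>+b. P1 v w a b \<partial>lborel \<partial>lborel) = ennreal (1/6) * K1 v w"
proof -
  have inner: "(\<integral>\<^sup>+a. P1 v w a b \<partial>lborel) = ennreal (Aw0 b) * indicator {0<..} b * K1 v w" for b
  proof (cases "b > 0")
    case True
    have "(\<integral>\<^sup>+a. P1 v w a b \<partial>lborel) = ennreal \<bar>b\<bar> * (\<integral>\<^sup>+s. P1 v w (0 + b * s) b \<partial>lborel)"
      using True by (intro nn_integral_real_affine) auto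
    also have "\<dots> = (\<integral>\<^sup>+s. ennreal b * P1 v w (b * s) b \<partial>lborel)"
      using True by (subst nn_integral_cmult) auto
    also have "\<dots> = (\<integral>\<^sup>+s. ennreal (Aw0 b) * (ennreal (1 / qn v w s 1) * indicator {0<..<1} s) \<partial>lborel)"
    proof (rule nn_integral_cong)
      fix s :: real
      show "ennreal b * P1 v w (b * s) b = ennreal (Aw0 b) * (ennreal (1 / qn v w s 1) * indicator {0<..<1} s)"
      proof (cases "0 < s \<and> s < 1")
        case c: True
        have "0 < b * s" "b * s < b" using c True by (auto simp: mult_less_cancel_left1)
        hence "P1 v w (b * s) b = HH v w (b * s) b" using True by (simp add: P1_def)
        thus ?thesis using HH_P1[OF True, of s v w] c by (simp add: mult.commute)
      next
        case c: False
        have "\<not> (0 < b * s \<and> b * s < b)"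
        proof
          assume h: "0 < b * s \<and> b * s < b"
          hence "0 < s" using True by (simp add: zero_less_mult_iff)
          moreover have "s < 1" using h True by (simp add: mult_less_cancel_left1)
          ultimately show False using c by simp
        qed
        hence "P1 v w (b * s) b = 0" unfolding P1_def by auto
        moreover have "indicator {0<..<1} s = (0::ennreal)" using c by auto
        ultimately show ?thesis by simp
      qed
    qed
    also have "\<dots> = ennreal (Aw0 b) * K1 v w"
      unfolding K1_def by (subst nn_integral_cmult) (auto simp: qn_def)
    finally show ?thesis using True by simp
  next
    case False
    hence "P1 v w a b = 0" for a unfolding P1_def by auto
    thus ?thesis using False by simp
  qed
  have "(\<integral>\<^sup>+a. \<integral>\<^sup>+b. P1 v w a b \<partial>lborel \<partial>lborel) = (\<integral>\<^sup>+b. \<integral>\<^sup>+a. P1 v w a b \<partial>lborel \<partial>lborel)"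
    using lborel_pair.Fubini'[OF Pm0] by simp
  also have "\<dots> = (\<integral>\<^sup>+b. ennreal (Aw0 b) * indicator {0<..} b * K1 v w \<partial>lborel)"
    by (simp add: inner)
  also have "\<dots> = (\<integral>\<^sup>+b. ennreal (Aw0 b) * indicator {0<..} b \<partial>lborel) * K1 v w"
    by (subst nn_integral_multc) (auto simp: Aw0_def)
  finally show ?thesis by (simp add: G3')
qed

lemma J3: "(\<integral>\<^sup>+a. \<integral>\<^sup>+b. P3 v w a b \<partial>lborel \<partial>lborel) = ennreal (1/6) * K3 v w"
proof -
  have sub: "(\<integral>\<^sup>+b. P3 v w a b \<partial>lborel) = (\<integral>\<^sup>+s. P3 v w a (a - s) \<partial>lborel)" for a
  proof -
    have "(\<integral>\<^sup>+b. P3 v w a b \<partial>lborel) = ennreal \<bar>-1\<bar> * (\<integral>\<^sup>+s. P3 v w a (a + (-1) * s) \<partial>lborel)"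
      by (intro nn_integral_real_affine) auto
    thus ?thesis by simp
  qed
  have inner: "(\<integral>\<^sup>+a. P3 v w a (a - s) \<partial>lborel) = ennreal (Aw0 s) * indicator {0<..} s * K3 v w" for s
  proof (cases "s > 0")
    case True
    have "(\<integral>\<^sup>+a. P3 v w a (a - s) \<partial>lborel) = ennreal \<bar>s\<bar> * (\<integral>\<^sup>+e. P3 v w (0 + s * e) ((0 + s * e) - s) \<partial>lborel)"
      using True by (intro nn_integral_real_affine[where f = "\<lambda>a. P3 v w a (a - s)"]) auto
    also have "\<dots> = (\<integral>\<^sup>+e. ennreal s * P3 v w (s * e) (s * e - s) \<partial>lborel)"
      using True by (subst nn_integral_cmult) auto
    also have "\<dots> = (\<integral>\<^sup>+e. ennreal (Aw0 s) * (ennreal (1 / qn v w e (e - 1)) * indicator {0<..<1} e) \<partial>lborel)"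
    proof (rule nn_integral_cong)
      fix e :: real
      show "ennreal s * P3 v w (s * e) (s * e - s) = ennreal (Aw0 s) * (ennreal (1 / qn v w e (e - 1)) * indicator {0<..<1} e)"
      proof (cases "0 < e \<and> e < 1")
        case c: True
        have "0 < s * e" "s * e - s < 0" using c True by (auto simp: mult_less_cancel_left1)
        hence "P3 v w (s * e) (s * e - s) = HH v w (s * e) (s * e - s)" by (simp add: P3_def)
        thus ?thesis using HH_P3[OF True, of e v w] c by (simp add: mult.commute)
      next
        case c: False
        have "\<not> (0 < s * e \<and> s * e - s < 0)"
        proof
          assume h: "0 < s * e \<and> s * e - s < 0"
          hence "0 < e" using True by (simp add: zero_less_mult_iff)
          moreover have "e < 1" using h True by (simp add: mult_less_cancel_left1)
          ultimately show False using c by simp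
        qed
        hence "P3 v w (s * e) (s * e - s) = 0" unfolding P3_def by auto
        moreover have "indicator {0<..<1} e = (0::ennreal)" using c by auto
        ultimately show ?thesis by simp
      qed
    qed
    also have "\<dots> = ennreal (Aw0 s) * K3 v w"
      unfolding K3_def by (subst nn_integral_cmult) (auto simp: qn_def)
    finally show ?thesis using True by simp
  next
    case False
    hence "P3 v w a (a - s) = 0" for a unfolding P3_def by auto
    thus ?thesis using False by simp
  qed
  have "(\<integral>\<^sup>+a. \<integral>\<^sup>+b. P3 v w a b \<partial>lborel \<partial>lborel) = (\<integral>\<^sup>+a. \<integral>\<^sup>+s. P3 v w a (a - s) \<partial>lborel \<partial>lborel)"
    by (simp add: sub)
  also have "\<dots> = (\<integral>\<^sup>+s. \<integral>\<^sup>+a. P3 v w a (a - s) \<partial>lborel \<partial>lborel)"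
    using lborel_pair.Fubini'[OF Pm8] by simp
  also have "\<dots> = (\<integral>\<^sup>+s. ennreal (Aw0 s) * indicator {0<..} s * K3 v w \<partial>lborel)"
    by (simp add: inner)
  also have "\<dots> = (\<integral>\<^sup>+s. ennreal (Aw0 s) * indicator {0<..} s \<partial>lborel) * K3 v w"
    by (subst nn_integral_multc) (auto simp: Aw0_def)
  finally show ?thesis by (simp add: G3')
qed

lemma Phi_neg: "(\<integral>\<^sup>+b. HH v w (- a) b \<partial>lborel) = (\<integral>\<^sup>+b. HH v w a b \<partial>lborel)"
proof -
  have "(\<integral>\<^sup>+b. HH v w (- a) b \<partial>lborel) = ennreal \<bar>-1\<bar> * (\<integral>\<^sup>+b. HH v w (- a) (0 + (-1) * b) \<partial>lborel)"
    by (intro nn_integral_real_affine) auto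
  thus ?thesis by (simp add: HH_neg)
qed

lemma split3: "indicator {0<..} a * HH v w a b = P1 v w a b + P2 v w a b + P3 v w a b"
  unfolding P1_def P2_def P3_def by (auto simp: indicator_def)

lemma S4: "(\<integral>\<^sup>+a. \<integral>\<^sup>+b. HH v w a b \<partial>lborel \<partial>lborel) = ennreal (1/6) * (K1 v w + K2 v w + K3 v w) + ennreal (1/6) * (K1 v w + K2 v w + K3 v w)"
proof -
  define \<Phi> where "\<Phi> a = (\<integral>\<^sup>+b. HH v w a b \<partial>lborel)" for a
  have mPhi[measurable]: "\<Phi> \<in> borel_measurable borel"
    unfolding \<Phi>_def using HH_meas by measurable
  have "(\<integral>\<^sup>+a. \<Phi> a \<partial>lborel) = (\<integral>\<^sup>+a. indicator {0<..} a * \<Phi> a + indicator {..<0} a * \<Phi> a \<partial>lborel)"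
    by (intro nn_integral_cong_AE eventually_mono[OF AE_lborel_singleton[of 0]])
       (auto simp: indicator_def)
  also have "\<dots> = (\<integral>\<^sup>+a. indicator {0<..} a * \<Phi> a \<partial>lborel) + (\<integral>\<^sup>+a. indicator {..<0} a * \<Phi> a \<partial>lborel)"
    by (rule nn_integral_add) auto
  also have "(\<integral>\<^sup>+a. indicator {..<0} a * \<Phi> a \<partial>lborel) = (\<integral>\<^sup>+a. indicator {0<..} a * \<Phi> a \<partial>lborel)"
  proof -
    have "(\<integral>\<^sup>+a. indicator {..<0} a * \<Phi> a \<partial>lborel) = ennreal \<bar>-1\<bar> * (\<integral>\<^sup>+a. indicator {..<0} (0 + (-1) * a) * \<Phi> (0 + (-1) * a) \<partial>lborel)"
      by (intro nn_integral_real_affine) auto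
    also have "\<dots> = (\<integral>\<^sup>+a. indicator {..<0} (- a) * \<Phi> (- a) \<partial>lborel)"
      by simp
    also have "\<dots> = (\<integral>\<^sup>+a. indicator {0<..} a * \<Phi> a \<partial>lborel)"
      by (rule nn_integral_cong) (simp add: \<Phi>_def Phi_neg indicator_def)
    finally show ?thesis .
  qed
  also have "(\<integral>\<^sup>+a. indicator {0<..} a * \<Phi> a \<partial>lborel) =
     (\<integral>\<^sup>+a. (\<integral>\<^sup>+b. P1 v w a b \<partial>lborel) + (\<integral>\<^sup>+b. P2 v w a b \<partial>lborel) + (\<integral>\<^sup>+b. P3 v w a b \<partial>lborel) \<partial>lborel)"
  proof (rule nn_integral_cong)
    fix a :: real
    have "indicator {0<..} a * \<Phi> a = (\<integral>\<^sup>+b. indicator {0<..} a * HH v w a b \<partial>lborel)"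
      unfolding \<Phi>_def by (subst nn_integral_cmult) auto
    also have "\<dots> = (\<integral>\<^sup>+b. P1 v w a b + P2 v w a b + P3 v w a b \<partial>lborel)"
      by (simp add: split3)
    also have "\<dots> = (\<integral>\<^sup>+b. P1 v w a b + P2 v w a b \<partial>lborel) + (\<integral>\<^sup>+b. P3 v w a b \<partial>lborel)"
      by (rule nn_integral_add) auto
    also have "(\<integral>\<^sup>+b. P1 v w a b + P2 v w a b \<partial>lborel) = (\<integral>\<^sup>+b. P1 v w a b \<partial>lborel) + (\<integral>\<^sup>+b. P2 v w a b \<partial>lborel)"
      by (rule nn_integral_add) auto
    finally show "indicator {0<..} a * \<Phi> a = (\<integral>\<^sup>+b. P1 v w a b \<partial>lborel) + (\<integral>\<^sup>+b. P2 v w a b \<partial>lborel) + (\<integral>\<^sup>+b. P3 v w a b \<partial>lborel)" .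
  qed
  also have "\<dots> = (\<integral>\<^sup>+a. (\<integral>\<^sup>+b. P1 v w a b \<partial>lborel) + (\<integral>\<^sup>+b. P2 v w a b \<partial>lborel) \<partial>lborel) + (\<integral>\<^sup>+a. \<integral>\<^sup>+b. P3 v w a b \<partial>lborel \<partial>lborel)"
    by (rule nn_integral_add) auto
  also have "(\<integral>\<^sup>+a. (\<integral>\<^sup>+b. P1 v w a b \<partial>lborel) + (\<integral>\<^sup>+b. P2 v w a b \<partial>lborel) \<partial>lborel) = (\<integral>\<^sup>+a. \<integral>\<^sup>+b. P1 v w a b \<partial>lborel \<partial>lborel) + (\<integral>\<^sup>+a. \<integral>\<^sup>+b. P2 v w a b \<partial>lborel \<partial>lborel)"
    by (rule nn_integral_add) auto
  finally have "(\<integral>\<^sup>+a. \<Phi> a \<partial>lborel) = ennreal (1/6) * (K1 v w + K2 v w + K3 v w) + ennreal (1/6) * (K1 v w + K2 v w + K3 v w)"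
    by (simp add: J1 J2 J3 distrib_left)
  thus ?thesis by (simp add: \<Phi>_def)
qed

lemma K_val:
  fixes a b :: "real^3"
  assumes l: "lin2 a b" and f: "\<And>x. 0 < x \<Longrightarrow> x < 1 \<Longrightarrow> h x = 1 / norm (x *\<^sub>R a + b)"
  shows "(\<integral>\<^sup>+x. ennreal (h x) * indicator {0<..<1} x \<partial>lborel) =
    ennreal (F_aux ((norm a)^2) (2 * (a \<bullet> b)) ((norm b)^2) 1 - F_aux ((norm a)^2) (2 * (a \<bullet> b)) ((norm b)^2) 0)"
proof -
  have "(\<integral>\<^sup>+x. ennreal (h x) * indicator {0<..<1} x \<partial>lborel) = (\<integral>\<^sup>+x. ennreal (1 / norm (x *\<^sub>R a + b)) * indicator {0..1} x \<partial>lborel)"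
  proof (rule nn_integral_cong_AE)
    show "AE x in lborel. ennreal (h x) * indicator {0<..<1} x = ennreal (1 / norm (x *\<^sub>R a + b)) * indicator {0..1} x"
      using AE_lborel_singleton[of 0] AE_lborel_singleton[of 1]
      by eventually_elim (auto simp: indicator_def f)
  qed
  also have "\<dots> = ennreal (F_aux ((norm a)^2) (2 * (a \<bullet> b)) ((norm b)^2) 1 - F_aux ((norm a)^2) (2 * (a \<bullet> b)) ((norm b)^2) 0)"
    by (rule nn_integral_has_integral_lebesgue'[OF _ ftc_term[OF l]]) auto
  finally show ?thesis .
qed

lemma F_nonneg:
  fixes a b :: "real^3"
  assumes l: "lin2 a b"
  shows "0 \<le> F_aux ((norm a)^2) (2 * (a \<bullet> b)) ((norm b)^2) 1 - F_aux ((norm a)^2) (2 * (a \<bullet> b)) ((norm b)^2) 0"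
  by (rule has_integral_nonneg[OF ftc_term[OF l]]) auto

lemma cont_term:
  fixes a b :: "real^3"
  assumes l: "lin2 a b"
  shows "continuous_on {0..1} (\<lambda>x. 1 / norm (x *\<^sub>R a + b))"
proof -
  have nz: "x *\<^sub>R a + b \<noteq> 0" for x using lin2_nz[OF l, of x 1] by simp
  show ?thesis using nz by (intro continuous_intros) auto
qed

theorem mainTheorem1:
  fixes p v w :: "real^3"
  assumes "v \<noteq> w" and "independent {v, w}"
  shows "set_integrable lborel (ref_tri \<times> ref_tri)
           (\<lambda>z. 1 / norm (chi_tau p v w (fst z) - chi_tau p v w (snd z)))
       \<and> galerkin_I p v w = (gram_tau v w)^2 / (12 * pi) *
           (LBINT \<eta>=0..1. 1 / norm (\<eta> *\<^sub>R v + w) + 1 / norm (\<eta> *\<^sub>R w + v)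
                            + 1 / norm (\<eta> *\<^sub>R (w + v) - w))
       \<and> galerkin_I p v w = (gram_tau v w)^2 / (12 * pi) *
           ((F_aux ((norm v)^2) (2 * (v \<bullet> w)) ((norm w)^2) 1
              - F_aux ((norm v)^2) (2 * (v \<bullet> w)) ((norm w)^2) 0)
          + (F_aux ((norm w)^2) (2 * (w \<bullet> v)) ((norm v)^2) 1
              - F_aux ((norm w)^2) (2 * (w \<bullet> v)) ((norm v)^2) 0)
          + (F_aux ((norm (w + v))^2) (- 2 * ((w + v) \<bullet> w)) ((norm w)^2) 1
              - F_aux ((norm (w + v))^2) (- 2 * ((w + v) \<bullet> w)) ((norm w)^2) 0))"
proof -
  have l1: "lin2 v w" using lin2_vw[OF assms] .
  have l2: "lin2 w v" using lin2_swap[OF l1] .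
  have l3: "lin2 (w + v) (- w)" using lin2_3[OF l1] .
  define D1 where "D1 = F_aux ((norm v)^2) (2 * (v \<bullet> w)) ((norm w)^2) 1
              - F_aux ((norm v)^2) (2 * (v \<bullet> w)) ((norm w)^2) 0"
  define D2 where "D2 = F_aux ((norm w)^2) (2 * (w \<bullet> v)) ((norm v)^2) 1
              - F_aux ((norm w)^2) (2 * (w \<bullet> v)) ((norm v)^2) 0"
  define D3 where "D3 = F_aux ((norm (w + v))^2) (- 2 * ((w + v) \<bullet> w)) ((norm w)^2) 1
              - F_aux ((norm (w + v))^2) (- 2 * ((w + v) \<bullet> w)) ((norm w)^2) 0"
  have D3': "F_aux ((norm (w + v))^2) (2 * ((w + v) \<bullet> - w)) ((norm (- w))^2) 1
              - F_aux ((norm (w + v))^2) (2 * ((w + v) \<bullet> - w)) ((norm (- w))^2) 0 = D3"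
    unfolding D3_def by simp
  have ftc1: "((\<lambda>x. 1 / norm (x *\<^sub>R v + w)) has_integral D1) {0..1}"
    unfolding D1_def by (rule ftc_term[OF l1])
  have ftc2: "((\<lambda>x. 1 / norm (x *\<^sub>R w + v)) has_integral D2) {0..1}"
    unfolding D2_def by (rule ftc_term[OF l2])
  have ftc3: "((\<lambda>x. 1 / norm (x *\<^sub>R (w + v) - w)) has_integral D3) {0..1}"
    using ftc_term[OF l3] unfolding D3' by simp
  have n1: "0 \<le> D1" by (rule has_integral_nonneg[OF ftc1]) auto
  have n2: "0 \<le> D2" by (rule has_integral_nonneg[OF ftc2]) auto
  have n3: "0 \<le> D3" by (rule has_integral_nonneg[OF ftc3]) auto
  have k1: "K1 v w = ennreal D1"
    unfolding K1_def D1_def by (rule K_val[OF l1]) (simp add: qn_def)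
  have k2: "K2 v w = ennreal D2"
  proof -
    have "K2 v w = (\<integral>\<^sup>+x. ennreal (1 / norm (x *\<^sub>R w + v)) * indicator {0..1} x \<partial>lborel)"
      unfolding K2_def qn_def by (simp add: add.commute)
    also have "\<dots> = ennreal D2"
      by (rule nn_integral_has_integral_lebesgue'[OF _ ftc2]) auto
    finally show ?thesis .
  qed
  have k3: "K3 v w = ennreal D3"
  proof -
    have "K3 v w = ennreal (F_aux ((norm (w + v))^2) (2 * ((w + v) \<bullet> - w)) ((norm (- w))^2) 1
              - F_aux ((norm (w + v))^2) (2 * ((w + v) \<bullet> - w)) ((norm (- w))^2) 0)"
      unfolding K3_def
    proof (rule K_val[OF l3])
      fix x :: real
      have "x *\<^sub>R v + (x - 1) *\<^sub>R w = x *\<^sub>R (w + v) + - w" by (simp add: algebra_simps)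
      thus "1 / qn v w x (x - 1) = 1 / norm (x *\<^sub>R (w + v) + - w)" unfolding qn_def by simp
    qed
    thus ?thesis unfolding D3' .
  qed
  define D where "D = D1 + D2 + D3"
  have nD: "0 \<le> D" using n1 n2 n3 by (simp add: D_def)
  define g where "g z = indicator (ref_tri \<times> ref_tri) z *\<^sub>R (1 / norm (chi_tau p v w (fst z) - chi_tau p v w (snd z)))"
    for z :: "(real \<times> real) \<times> (real \<times> real)"
  have nn: "(\<integral>\<^sup>+z. ennreal (g z) \<partial>lborel) = ennreal (D / 3)"
  proof -
    have "(\<integral>\<^sup>+z. ennreal (g z) \<partial>lborel) = ennreal (1/6) * (K1 v w + K2 v w + K3 v w) + ennreal (1/6) * (K1 v w + K2 v w + K3 v w)"
      unfolding g_def S1 S4 ..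
    also have "K1 v w + K2 v w + K3 v w = ennreal D"
      unfolding k1 k2 k3 D_def using n1 n2 n3 by (simp add: ennreal_plus)
    also have "ennreal (1/6) * ennreal D = ennreal (D / 6)"
      using nD by (simp add: ennreal_mult[symmetric])
    also have "ennreal (D / 6) + ennreal (D / 6) = ennreal (D / 3)"
      using nD by (simp add: ennreal_plus[symmetric])
    finally show ?thesis .
  qed
  have gm: "g \<in> borel_measurable lborel"
  proof -
    have "g \<in> borel_measurable (lborel \<Otimes>\<^sub>M lborel)"
      unfolding g_def chi_tau_def by measurable
    thus ?thesis by (simp add: lborel_prod)
  qed
  have "integrable lborel g \<and> integral\<^sup>L lborel g = D / 3"
    using nn_integral_eq_integrable[OF gm _ , of "D / 3"] nn nD
    by (auto simp: g_def)
  hence int: "integrable lborel g" and ival: "integral\<^sup>L lborel g = D / 3" by auto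
  have si: "set_integrable lborel (ref_tri \<times> ref_tri)
           (\<lambda>z. 1 / norm (chi_tau p v w (fst z) - chi_tau p v w (snd z)))"
    using int unfolding set_integrable_def g_def .
  have gal: "galerkin_I p v w = (gram_tau v w)^2 / (4 * pi) * (D / 3)"
    unfolding galerkin_I_def set_lebesgue_integral_def by (simp only: ival[unfolded g_def])
  have cont: "continuous_on {0..1} (\<lambda>\<eta>. 1 / norm (\<eta> *\<^sub>R v + w) + 1 / norm (\<eta> *\<^sub>R w + v)
                            + 1 / norm (\<eta> *\<^sub>R (w + v) - w))"
    using cont_term[OF l1] cont_term[OF l2] cont_term[OF l3]
    by (intro continuous_on_add) auto
  have "(LBINT \<eta>=0..1. 1 / norm (\<eta> *\<^sub>R v + w) + 1 / norm (\<eta> *\<^sub>R w + v)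
                            + 1 / norm (\<eta> *\<^sub>R (w + v) - w))
      = integral {0..1} (\<lambda>\<eta>. 1 / norm (\<eta> *\<^sub>R v + w) + 1 / norm (\<eta> *\<^sub>R w + v)
                            + 1 / norm (\<eta> *\<^sub>R (w + v) - w))"
  proof -
    have "(LBINT \<eta>=ereal 0..ereal 1. 1 / norm (\<eta> *\<^sub>R v + w) + 1 / norm (\<eta> *\<^sub>R w + v)
                            + 1 / norm (\<eta> *\<^sub>R (w + v) - w))
      = integral {0..1} (\<lambda>\<eta>. 1 / norm (\<eta> *\<^sub>R v + w) + 1 / norm (\<eta> *\<^sub>R w + v)
                            + 1 / norm (\<eta> *\<^sub>R (w + v) - w))"
      by (rule interval_integral_eq_integral) (auto intro: borel_integrable_atLeastAtMost' cont)
    thus ?thesis by (simp add: zero_ereal_def[symmetric] one_ereal_def[symmetric])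
  qed
  also have "\<dots> = D"
    unfolding D_def by (intro integral_unique has_integral_add ftc1 ftc2 ftc3)
  finally have lb: "(LBINT \<eta>=0..1. 1 / norm (\<eta> *\<^sub>R v + w) + 1 / norm (\<eta> *\<^sub>R w + v)
                            + 1 / norm (\<eta> *\<^sub>R (w + v) - w)) = D" .
  have e: "(gram_tau v w)^2 / (4 * pi) * (D / 3) = (gram_tau v w)^2 / (12 * pi) * D"
    by (simp add: field_simps)
  show ?thesis
    using si gal lb e unfolding D_def D1_def D2_def D3_def by simp
qed

end
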